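(* In the symmetric-ordering setup, for every $w\ge2$ and all indices $\mu,\alpha_1,\ldots,\alpha_w$, $$\sum_{\sigma\in\Sigma_w}[\ldots[[\hat\partial^\mu,\hat x_{\alpha_{\sigma(1)}}],\hat x_{\alpha_{\sigma(2)}}],\ldots,\hat x_{\alpha_{\sigma(w)}}](1)=0\quad\text{in }U(\mathfrak g).$$
   Context: Symmetric-ordering setup: $\Bbbk$ is a field of characteristic $0$, $\mathfrak g$ an $n$-dimensional Lie algebra with basis $\hat x_1,\ldots,\hat x_n$; $\hat x_\alpha$ also denotes left multiplication by $\hat x_\alpha$ on $U(\mathfrak g)$, and commutators are taken in $\mathrm{End}_\Bbbk(U(\mathfrak g))$. $S(\mathfrak g)=\Bbbk[x_1,\ldots,x_n]$; the coexponential map $\xi:S(\mathfrak g)\to U(\mathfrak g)$ is the linear isomorphism $\xi(x_{\alpha_1}\cdots x_{\alpha_k})=\frac1{k!}\sum_{\sigma\in\Sigma_k}\hat x_{\alpha_{\sigma(1)}}\cdots\hat x_{\alpha_{\sigma(k)}}$; $\hat\partial^\mu\in\mathrm{End}_\Bbbk(U(\mathfrak g))$ is defined by $\hat\partial^\mu(\xi(f))=\xi(\partial f/\partial x_\mu)$. $\Sigma_w$ is the symmetric group; $1$ is the unit of $U(\mathfrak g)$. *)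

theory Defs
  imports "HOL-Combinatorics.Permutations" "HOL-Library.Function_Algebras"
begin

text \<open>
Lie algebra g with basis x_i indexed by a finite type 'i (n = CARD('i)),
given by structure constants: [x_a, x_b] = sum_c C a b c x_c.
The universal enveloping algebra U(g) is realised as the quotient of the free
associative algebra F on the x_i (finitely supported functions from words to 'k)
by the two-sided ideal generated by x_a x_b - x_b x_a - [x_a, x_b].
\<close>

type_synonym ('i, 'k) freealg = "'i list \<Rightarrow> 'k"

definition is_lie_alg :: "('i::finite \<Rightarrow> 'i \<Rightarrow> 'i \<Rightarrow> 'k::field) \<Rightarrow> bool" where
  "is_lie_alg C \<longleftrightarrow>
     (\<forall>a c. C a a c = 0) \<and>
     (\<forall>a b c. C a b c = - C b a c) \<and>
     (\<forall>a b c e. (\<Sum>d\<in>UNIV. C a b d * C d c e + C b c d * C d a e + C c a d * C d b e) = 0)"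

definition fa_carrier :: "('i, 'k::zero) freealg set" where
  "fa_carrier = {f. finite {w. f w \<noteq> 0}}"

definition fa_word :: "'i list \<Rightarrow> ('i, 'k::{zero,one}) freealg" where
  "fa_word u = (\<lambda>v. if v = u then 1 else 0)"

definition fa_scale :: "'k::times \<Rightarrow> ('i, 'k) freealg \<Rightarrow> ('i, 'k) freealg" where
  "fa_scale c f = (\<lambda>w. c * f w)"

definition fa_mult :: "('i, 'k::comm_semiring_1) freealg \<Rightarrow> ('i, 'k) freealg \<Rightarrow> ('i, 'k) freealg" where
  "fa_mult f g = (\<lambda>w. \<Sum>i\<le>length w. f (take i w) * g (drop i w))"

definition fa_lmul :: "'i \<Rightarrow> ('i, 'k::comm_semiring_1) freealg \<Rightarrow> ('i, 'k) freealg" where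
  "fa_lmul a f = fa_mult (fa_word [a]) f"

definition lie_rel :: "('i::finite \<Rightarrow> 'i \<Rightarrow> 'i \<Rightarrow> 'k::field) \<Rightarrow> 'i \<Rightarrow> 'i \<Rightarrow> ('i, 'k) freealg" where
  "lie_rel C a b = fa_word [a, b] - fa_word [b, a] - (\<Sum>c\<in>UNIV. fa_scale (C a b c) (fa_word [c]))"

text \<open>The two-sided ideal defining U(g) = F / I: the k-linear span of u r v,
  for words u, v and defining relations r.\<close>
definition env_ideal :: "('i::finite \<Rightarrow> 'i \<Rightarrow> 'i \<Rightarrow> 'k::field) \<Rightarrow> ('i, 'k) freealg set" where
  "env_ideal C =
     {\<Sum>g\<in>G. fa_scale (c g) g | G c. finite G \<and>
        G \<subseteq> {fa_mult (fa_mult (fa_word u) (lie_rel C a b)) (fa_word v) | u v a b. True}}"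

text \<open>Coexponential map on a monomial x_{a_1} ... x_{a_k} (given as the list of its indices).\<close>
definition coexp :: "'i list \<Rightarrow> ('i, 'k::field_char_0) freealg" where
  "coexp as = fa_scale (inverse (of_nat (fact (length as))))
     (\<Sum>\<sigma> | \<sigma> permutes {..<length as}. fa_word (map (\<lambda>i. as ! (\<sigma> i)) [0..<length as]))"

text \<open>Partial derivative d/dx_mu of the monomial x_{a_1}...x_{a_k} (product rule),
  pushed through the coexponential map: xi(d/dx_mu (x_{a_1}...x_{a_k})).\<close>
definition coexp_deriv :: "'i \<Rightarrow> 'i list \<Rightarrow> ('i, 'k::field_char_0) freealg" where
  "coexp_deriv \<mu> as = (\<Sum>j | j < length as \<and> as ! j = \<mu>. coexp (take j as @ drop (Suc j) as))"

text \<open>D represents a k-linear endomorphism of U(g) = F/I: it is k-linear on F,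
  preserves F and the ideal I, and it is the operator hat-partial^mu:
  D(xi(m)) = xi(d m / d x_mu) modulo I for every monomial m.\<close>
definition is_hat_partial ::
  "('i::finite \<Rightarrow> 'i \<Rightarrow> 'i \<Rightarrow> 'k::field_char_0) \<Rightarrow> 'i \<Rightarrow> (('i, 'k) freealg \<Rightarrow> ('i, 'k) freealg) \<Rightarrow> bool" where
  "is_hat_partial C \<mu> D \<longleftrightarrow>
     (\<forall>f\<in>fa_carrier. D f \<in> fa_carrier) \<and>
     (\<forall>f\<in>fa_carrier. \<forall>g\<in>fa_carrier. D (f + g) = D f + D g) \<and>
     (\<forall>c. \<forall>f\<in>fa_carrier. D (fa_scale c f) = fa_scale c (D f)) \<and>
     (\<forall>f\<in>env_ideal C \<inter> fa_carrier. D f \<in> env_ideal C) \<and>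
     (\<forall>as. D (coexp as) - coexp_deriv \<mu> as \<in> env_ideal C)"

fun iter_comm :: "(('i, 'k::comm_ring_1) freealg \<Rightarrow> ('i, 'k) freealg) \<Rightarrow> 'i list
                  \<Rightarrow> ('i, 'k) freealg \<Rightarrow> ('i, 'k) freealg" where
  "iter_comm D [] = D"
| "iter_comm D (a # as) = iter_comm (\<lambda>f. D (fa_lmul a f) - fa_lmul a (D f)) as"

end

theory Submission
  imports Defs "HOL.Modules" "HOL-Combinatorics.Multiset_Permutations"
begin


lemma sum_app: "(sum f A) x = sum (\<lambda>i. f i x) A"
  by (induct A rule: infinite_finite_induct) auto

lemma fa_word_mult_shift:
  "fa_mult (fa_word a) g = (\<lambda>w. if take (length a) w = a then g (drop (length a) w) else 0)"
proof (rule ext)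
  fix w :: "'a list"
  have "fa_mult (fa_word a) g w = (\<Sum>i\<le>length w. if i = length a \<and> take (length a) w = a then g (drop (length a) w) else 0)"
    unfolding fa_mult_def fa_word_def
    apply (rule sum.cong, simp)
    apply (auto simp: min_def split: if_splits)
    done
  also have "\<dots> = (if take (length a) w = a then g (drop (length a) w) else 0)"
  proof (cases "take (length a) w = a")
    case True
    have "length (take (length a) w) = length a" using True by simp
    then have "length a \<le> length w" by (simp add: min_def split: if_splits)
    then show ?thesis using True by (simp add: sum.delta')
  qed simp
  finally show "fa_mult (fa_word a) g w = (if take (length a) w = a then g (drop (length a) w) else 0)" .
qed

lemma fa_mult_word_right:
  "fa_mult g (fa_word v) = (\<lambda>w. if length v \<le> length w \<and> drop (length w - length v) w = v then g (take (length w - length v) w) else 0)"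
proof (rule ext)
  fix w :: "'a list"
  have "fa_mult g (fa_word v) w = (\<Sum>i\<le>length w. if i = length w - length v \<and> length v \<le> length w \<and> drop (length w - length v) w = v then g (take (length w - length v) w) else 0)"
    unfolding fa_mult_def fa_word_def
    apply (rule sum.cong, simp)
    apply (auto split: if_splits)
    done
  also have "\<dots> = (if length v \<le> length w \<and> drop (length w - length v) w = v then g (take (length w - length v) w) else 0)"
  proof (cases "length v \<le> length w \<and> drop (length w - length v) w = v")
    case True
    then show ?thesis by (simp add: sum.delta')
  qed auto
  finally show "fa_mult g (fa_word v) w = (if length v \<le> length w \<and> drop (length w - length v) w = v then g (take (length w - length v) w) else 0)" .
qed

lemma fa_lmul_shift: "fa_lmul x g = (\<lambda>w. if take 1 w = [x] then g (tl w) else 0)"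
  unfolding fa_lmul_def fa_word_mult_shift by (rule ext) (simp add: drop_Suc drop_0)

lemma fa_word_nil_mult[simp]: "fa_mult (fa_word []) g = g"
  unfolding fa_word_mult_shift by simp

lemma fa_word_mult_word: "fa_mult (fa_word u) (fa_word v) = fa_word (u @ v)"
  unfolding fa_word_mult_shift
  by (rule ext) (auto simp: fa_word_def append_eq_conv_conj, metis append_take_drop_id)

lemma fa_word_cons_mult: "fa_mult (fa_word (x # u)) g = fa_lmul x (fa_mult (fa_word u) g)"
  unfolding fa_lmul_shift fa_word_mult_shift
  apply (rule ext)
  subgoal for w by (cases w) auto
  done

lemma fa_word_append_mult: "fa_mult (fa_word (u @ v)) g = fa_mult (fa_word u) (fa_mult (fa_word v) g)"
  by (induct u) (simp_all add: fa_word_cons_mult)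

lemma fa_lmul_add: "fa_lmul x (f + g) = fa_lmul x f + fa_lmul x g"
  unfolding fa_lmul_shift by (rule ext) auto
lemma fa_lmul_diff: "fa_lmul x (f - g) = fa_lmul x f - (fa_lmul x g :: ('i,'k::comm_ring_1) freealg)"
  unfolding fa_lmul_shift by (rule ext) auto
lemma fa_lmul_scale: "fa_lmul x (fa_scale c f) = fa_scale c (fa_lmul x f)"
  unfolding fa_lmul_shift fa_scale_def by (rule ext) auto
lemma fa_lmul_sum: "fa_lmul x (sum f A) = sum (\<lambda>i. fa_lmul x (f i)) A"
  unfolding fa_lmul_shift by (rule ext) (auto simp: sum_app)
lemma fa_lmul_zero: "fa_lmul x 0 = 0"
  unfolding fa_lmul_shift by (rule ext) auto

lemma fa_lmul_case: "fa_lmul x g = (\<lambda>w. case w of [] \<Rightarrow> 0 | y # u \<Rightarrow> if y = x then g u else 0)"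
  unfolding fa_lmul_shift by (rule ext) (auto split: list.splits)

lemma fa_lmul_right_word:
  "fa_lmul x (fa_mult g (fa_word v)) = fa_mult (fa_lmul x g) (fa_word v)"
proof (rule ext)
  fix w
  show "fa_lmul x (fa_mult g (fa_word v)) w = fa_mult (fa_lmul x g) (fa_word v) w"
  proof (cases w)
    case Nil
    then show ?thesis unfolding fa_mult_word_right fa_lmul_case by auto
  next
    case (Cons y u)
    show ?thesis
    proof (cases "length v = Suc (length u)")
      case True
      then show ?thesis unfolding fa_mult_word_right fa_lmul_case Cons by auto
    next
      case False
      show ?thesis
      proof (cases "length v \<le> length u")
        case True
        then have e: "Suc (length u) - length v = Suc (length u - length v)" by simp
        show ?thesis unfolding fa_mult_word_right fa_lmul_case Cons using True by (simp add: e)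
      next
        case False2: False
        with False show ?thesis unfolding fa_mult_word_right fa_lmul_case Cons by auto
      qed
    qed
  qed
qed

lemma fa_scale_sum: "fa_scale (c::'k::comm_semiring_1) (sum f A) = sum (\<lambda>i. fa_scale c (f i)) A"
  unfolding fa_scale_def by (rule ext) (auto simp: sum_app sum_distrib_left)

lemma module_fa: "module (fa_scale :: 'k::field \<Rightarrow> ('i,'k) freealg \<Rightarrow> _)"
  unfolding module_def by (auto simp: fa_scale_def fun_eq_iff algebra_simps)



definition gen :: "('i::finite \<Rightarrow> 'i \<Rightarrow> 'i \<Rightarrow> 'k::field) \<Rightarrow> ('i, 'k) freealg set" where
  "gen C = {fa_mult (fa_mult (fa_word u) (lie_rel C a b)) (fa_word v) | u v a b. True}"

lemma env_ideal_span: "env_ideal C = module.span fa_scale (gen C)"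
  unfolding env_ideal_def module.span_explicit[OF module_fa] gen_def by simp

lemma I_add: "x \<in> env_ideal C \<Longrightarrow> y \<in> env_ideal C \<Longrightarrow> x + y \<in> env_ideal C"
  unfolding env_ideal_span by (rule module.span_add[OF module_fa])
lemma I_diff: "x \<in> env_ideal C \<Longrightarrow> y \<in> env_ideal C \<Longrightarrow> x - y \<in> env_ideal C"
  unfolding env_ideal_span by (rule module.span_diff[OF module_fa])
lemma I_scale: "x \<in> env_ideal C \<Longrightarrow> fa_scale c x \<in> env_ideal C"
  unfolding env_ideal_span by (rule module.span_scale[OF module_fa])
lemma I_zero: "0 \<in> env_ideal C"
  unfolding env_ideal_span by (rule module.span_zero[OF module_fa])
lemma I_sum: "(\<And>x. x \<in> A \<Longrightarrow> f x \<in> env_ideal C) \<Longrightarrow> sum f A \<in> env_ideal C"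
  unfolding env_ideal_span by (rule module.span_sum[OF module_fa])

lemma gen_lmul: "g \<in> gen C \<Longrightarrow> fa_lmul x g \<in> gen C"
  unfolding gen_def
  apply (clarsimp simp: fa_lmul_right_word fa_word_cons_mult[symmetric])
  apply (rule exI)+
  apply (rule refl)
  done

lemma I_lmul: "y \<in> env_ideal C \<Longrightarrow> fa_lmul x y \<in> env_ideal C"
  unfolding env_ideal_span
  apply (erule module.span_induct_alt[OF module_fa])
   apply (simp only: zero_fun_def[symmetric] fa_lmul_zero module.span_zero[OF module_fa])
  apply (subst fa_lmul_add, subst fa_lmul_scale)
  apply (rule module.span_add[OF module_fa], rule module.span_scale[OF module_fa],
         rule module.span_base[OF module_fa], erule gen_lmul, assumption)
  done

lemma car_word: "(fa_word u :: ('i,'k::zero_neq_one) freealg) \<in> fa_carrier"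
proof -
  have "{w. fa_word u w \<noteq> (0::'k::zero_neq_one)} \<subseteq> {u}" by (auto simp: fa_word_def)
  then show ?thesis unfolding fa_carrier_def using finite_subset by auto
qed

lemma car_add: "(f :: ('i,'k::monoid_add) freealg) \<in> fa_carrier \<Longrightarrow> g \<in> fa_carrier \<Longrightarrow> f + g \<in> fa_carrier"
  unfolding fa_carrier_def
  by (rule CollectI, rule finite_subset[of _ "{w. f w \<noteq> 0} \<union> {w. g w \<noteq> 0}"]) auto

lemma car_zero: "0 \<in> fa_carrier"
  unfolding fa_carrier_def by simp

lemma car_sum: "(\<And>x. x \<in> A \<Longrightarrow> f x \<in> fa_carrier) \<Longrightarrow> sum f A \<in> fa_carrier"
  by (induct A rule: infinite_finite_induct) (auto simp: car_zero car_add)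

lemma car_scale: "f \<in> fa_carrier \<Longrightarrow> fa_scale (c::'k::mult_zero) f \<in> fa_carrier"
  unfolding fa_carrier_def fa_scale_def
  by (rule CollectI, rule finite_subset[of _ "{w. f w \<noteq> 0}"]) auto

lemma hp_add:
  assumes "is_hat_partial C \<mu> D" "f \<in> fa_carrier" "g \<in> fa_carrier"
  shows "D (f + g) = D f + D g"
proof -
  have "\<forall>f\<in>fa_carrier. \<forall>g\<in>fa_carrier. D (f + g) = D f + D g"
    using assms(1) unfolding is_hat_partial_def by (elim conjE) assumption
  then show ?thesis using assms(2,3) by simp
qed

lemma hp_scale:
  assumes "is_hat_partial C \<mu> D" "f \<in> fa_carrier"
  shows "D (fa_scale c f) = fa_scale c (D f)"
proof -
  have "\<forall>c. \<forall>f\<in>fa_carrier. D (fa_scale c f) = fa_scale c (D f)"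
    using assms(1) unfolding is_hat_partial_def by (elim conjE) assumption
  then show ?thesis using assms(2) by simp
qed

lemma hp_coexp:
  assumes "is_hat_partial C \<mu> D"
  shows "D (coexp as) - coexp_deriv \<mu> as \<in> env_ideal C"
proof -
  have "\<forall>as. D (coexp as) - coexp_deriv \<mu> as \<in> env_ideal C"
    using assms(1) unfolding is_hat_partial_def by (elim conjE) assumption
  then show ?thesis by simp
qed

lemma D_zero:
  assumes "is_hat_partial C \<mu> D" shows "D 0 = 0"
proof -
  have "D (0 + 0) = D 0 + D 0" using hp_add[OF assms car_zero car_zero] .
  then show ?thesis by simp
qed

lemma D_sum:
  assumes "is_hat_partial C \<mu> D" and "\<And>x. x \<in> A \<Longrightarrow> f x \<in> fa_carrier"
  shows "D (sum f A) = sum (\<lambda>x. D (f x)) A"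
  using assms(2)
proof (induct A rule: infinite_finite_induct)
  case (infinite A) then show ?case using D_zero[OF assms(1)] by (metis sum.infinite)
next
  case empty then show ?case using D_zero[OF assms(1)] by (simp add: zero_fun_def)
next
  case (insert x F)
  then have "D (f x + sum f F) = D (f x) + D (sum f F)"
    using insert.prems by (intro hp_add[OF assms(1)] car_sum) auto
  moreover have "D (sum f F) = (\<Sum>x\<in>F. D (f x))" using insert by blast
  ultimately show ?case by (simp only: sum.insert[OF insert(1,2)])
qed


lemma perm_cons_sum:
  assumes "finite A" "A \<noteq> {}"
  shows "(\<Sum>p\<in>permutations_of_set A. G p) = (\<Sum>x\<in>A. \<Sum>q\<in>permutations_of_set (A - {x}). G (x # q))"
proof -
  have "(\<Sum>p\<in>permutations_of_set A. G p) = (\<Sum>x\<in>A. \<Sum>p\<in>(#) x ` permutations_of_set (A - {x}). G p)"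
    unfolding permutations_of_set_nonempty[OF assms(2)]
    by (rule sum.UNION_disjoint) (auto simp: assms(1))
  also have "\<dots> = (\<Sum>x\<in>A. \<Sum>q\<in>permutations_of_set (A - {x}). G (x # q))"
    by (rule sum.cong, simp, subst sum.reindex) auto
  finally show ?thesis .
qed

lemma perm_rev_sum: "(\<Sum>p\<in>permutations_of_set A. G p) = (\<Sum>p\<in>permutations_of_set A. G (rev p))"
proof -
  have "(\<Sum>p\<in>permutations_of_set A. G (rev p)) = (\<Sum>p\<in>rev ` permutations_of_set A. G p)"
    by (subst sum.reindex) (auto intro: inj_onI)
  then show ?thesis by simp
qed

lemma perm_snoc_sum:
  assumes "finite A" "A \<noteq> {}"
  shows "(\<Sum>p\<in>permutations_of_set A. G p) = (\<Sum>x\<in>A. \<Sum>q\<in>permutations_of_set (A - {x}). G (q @ [x]))"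
proof -
  have "(\<Sum>p\<in>permutations_of_set A. G p) = (\<Sum>p\<in>permutations_of_set A. G (rev p))"
    by (rule perm_rev_sum)
  also have "\<dots> = (\<Sum>x\<in>A. \<Sum>q\<in>permutations_of_set (A - {x}). G (rev q @ [x]))"
    by (subst perm_cons_sum[OF assms]) simp
  also have "\<dots> = (\<Sum>x\<in>A. \<Sum>q\<in>permutations_of_set (A - {x}). G (q @ [x]))"
    by (rule sum.cong, simp, rule perm_rev_sum[symmetric, where G = "\<lambda>q. G (q @ [_])"])
  finally show ?thesis .
qed

lemma perm_bij0:
  "bij_betw (\<lambda>\<sigma>. map \<sigma> [0..<k]) {\<sigma>. \<sigma> permutes {..<k}} (permutations_of_set {..<k})"
proof (rule bij_betwI')
  fix \<sigma> \<tau> assume s: "\<sigma> \<in> {\<sigma>. \<sigma> permutes {..<k}}" and t: "\<tau> \<in> {\<sigma>. \<sigma> permutes {..<k}}"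
  show "(map \<sigma> [0..<k] = map \<tau> [0..<k]) = (\<sigma> = \<tau>)"
  proof
    assume e: "map \<sigma> [0..<k] = map \<tau> [0..<k]"
    show "\<sigma> = \<tau>"
    proof
      fix i show "\<sigma> i = \<tau> i"
      proof (cases "i < k")
        case True
        then show ?thesis using arg_cong[OF e, of "\<lambda>l. l ! i"] by simp
      next
        case False
        then show ?thesis using s t by (simp add: permutes_not_in)
      qed
    qed
  qed simp
next
  fix \<sigma> assume s: "\<sigma> \<in> {\<sigma>. \<sigma> permutes {..<k}}"
  then have p: "\<sigma> permutes {..<k}" by simp
  show "map \<sigma> [0..<k] \<in> permutations_of_set {..<k}"
  proof (rule permutations_of_setI)
    show "set (map \<sigma> [0..<k]) = {..<k}"
      using permutes_image[OF p] by (simp add: atLeast0LessThan)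
    show "distinct (map \<sigma> [0..<k])"
      using permutes_inj[OF p] by (simp add: distinct_map inj_on_def)
  qed
next
  fix q assume q: "q \<in> permutations_of_set {..<k}"
  have lq: "length q = k" using length_finite_permutations_of_set[OF q] by simp
  have dq: "distinct q" "set q = {..<k}" using q by (auto simp: permutations_of_set_def)
  define \<sigma> where "\<sigma> = (\<lambda>i. if i < k then q ! i else i)"
  have "bij_betw ((!) q) {..<k} {..<k}" using bij_betw_nth[OF dq(1)] lq dq(2) by simp
  then have "bij_betw \<sigma> {..<k} {..<k}" by (rule bij_betw_cong[THEN iffD1, rotated]) (simp add: \<sigma>_def)
  then have "\<sigma> permutes {..<k}" by (rule bij_imp_permutes) (simp add: \<sigma>_def)
  moreover have "q = map \<sigma> [0..<k]" by (rule nth_equalityI) (auto simp: lq \<sigma>_def)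
  ultimately show "\<exists>\<sigma>\<in>{\<sigma>. \<sigma> permutes {..<k}}. q = map \<sigma> [0..<k]" by blast
qed

lemma perm_bij_sum:
  assumes "distinct ps"
  shows "(\<Sum>\<sigma> | \<sigma> permutes {..<length ps}. G (map (\<lambda>i. ps ! \<sigma> i) [0..<length ps]))
       = (\<Sum>p\<in>permutations_of_set (set ps). G p)"
proof -
  let ?k = "length ps"
  have "(\<Sum>\<sigma> | \<sigma> permutes {..<?k}. G (map (\<lambda>i. ps ! \<sigma> i) [0..<?k]))
      = (\<Sum>\<sigma> | \<sigma> permutes {..<?k}. (G \<circ> map ((!) ps)) (map \<sigma> [0..<?k]))"
    by (simp add: comp_def)
  also have "\<dots> = (\<Sum>q\<in>permutations_of_set {..<?k}. G (map ((!) ps) q))"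
    using sum.reindex_bij_betw[OF perm_bij0, of "G \<circ> map ((!) ps)"] by simp
  also have "\<dots> = (\<Sum>p\<in>map ((!) ps) ` permutations_of_set {..<?k}. G p)"
  proof (rule sum.reindex[symmetric, unfolded comp_def])
    show "inj_on (map ((!) ps)) (permutations_of_set {..<?k})"
    proof (rule inj_on_mapI)
      show "inj_on ((!) ps) (\<Union> (set ` permutations_of_set {..<?k}))"
        using assms by (auto intro!: inj_on_nth)
    qed
  qed
  also have "map ((!) ps) ` permutations_of_set {..<?k} = permutations_of_set ((!) ps ` {..<?k})"
    using assms by (subst permutations_of_set_image_inj) (auto intro!: inj_on_nth)
  also have "(!) ps ` {..<?k} = set ps"
    by (auto simp: set_conv_nth)
  finally show ?thesis .
qed



definition Sym :: "(nat \<Rightarrow> 'i) \<Rightarrow> nat set \<Rightarrow> ('i,'k::field_char_0) freealg" where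
  "Sym \<alpha> N = (\<Sum>p\<in>permutations_of_set N. fa_word (map \<alpha> p))"

definition cf :: "nat \<Rightarrow> nat \<Rightarrow> 'k::field_char_0" where
  "cf n k = (-1)^k * of_nat (n choose k)"

definition LH :: "(('i,'k::field_char_0) freealg \<Rightarrow> ('i,'k) freealg) \<Rightarrow> (nat \<Rightarrow> 'i) \<Rightarrow> nat set \<Rightarrow> ('i,'k) freealg \<Rightarrow> ('i,'k) freealg" where
  "LH D \<alpha> N f = (\<Sum>p\<in>permutations_of_set N. iter_comm D (map \<alpha> p) f)"

definition RH :: "(('i,'k::field_char_0) freealg \<Rightarrow> ('i,'k) freealg) \<Rightarrow> (nat \<Rightarrow> 'i) \<Rightarrow> nat set \<Rightarrow> ('i,'k) freealg \<Rightarrow> ('i,'k) freealg" where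
  "RH D \<alpha> N f = (\<Sum>p\<in>permutations_of_set N. \<Sum>k\<le>card N.
     fa_scale (cf (card N) k) (fa_mult (fa_word (map \<alpha> (take k p))) (D (fa_mult (fa_word (map \<alpha> (drop k p))) f))))"

lemma iter_snoc: "iter_comm D (u @ [b]) f = iter_comm D u (fa_lmul b f) - fa_lmul b (iter_comm D u f)"
  by (induct u arbitrary: D) auto

lemma LH_rec:
  assumes "finite N" "N \<noteq> {}"
  shows "LH D \<alpha> N f = (\<Sum>b\<in>N. LH D \<alpha> (N - {b}) (fa_lmul (\<alpha> b) f) - fa_lmul (\<alpha> b) (LH D \<alpha> (N - {b}) f))"
  unfolding LH_def
  apply (subst perm_snoc_sum[OF assms])
  apply (rule sum.cong, rule refl)
  apply (simp only: map_append list.map iter_snoc sum_subtractf fa_lmul_sum)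
  done

lemma fa_scale_one: "fa_scale 1 (f :: ('i,'k::monoid_mult) freealg) = f"
  unfolding fa_scale_def by simp

lemma cf_0: "cf n 0 = (1::'k::field_char_0)"
  unfolding cf_def by simp

lemma cf_high: "cf m (Suc m) = (0::'k::field_char_0)"
  unfolding cf_def by simp

lemma cf_Suc: "cf (Suc m) (Suc k) = cf m (Suc k) - (cf m k :: 'k::field_char_0)"
  unfolding cf_def binomial_Suc_Suc of_nat_add by (simp add: algebra_simps)

lemma cf_shift:
  fixes g :: "nat \<Rightarrow> 'k::field_char_0"
  shows "(\<Sum>k\<le>Suc m. cf (Suc m) k * g k) = (\<Sum>k\<le>m. cf m k * g k) - (\<Sum>k\<le>m. cf m k * g (Suc k))"
proof -
  have 1: "(\<Sum>k\<le>Suc m. cf (Suc m) k * g k) = g 0 + (\<Sum>k\<le>m. cf (Suc m) (Suc k) * g (Suc k))"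
    by (simp only: sum.atMost_Suc_shift cf_0 mult_1_left)
  have 2: "(\<Sum>k\<le>m. cf (Suc m) (Suc k) * g (Suc k)) = (\<Sum>k\<le>m. cf m (Suc k) * g (Suc k)) - (\<Sum>k\<le>m. cf m k * g (Suc k))"
    by (simp only: cf_Suc left_diff_distrib sum_subtractf)
  have 3: "(\<Sum>k\<le>m. cf m k * g k) = (\<Sum>k\<le>Suc m. cf m k * g k)"
    by (simp only: sum.atMost_Suc cf_high mult_zero_left add_0_right)
  have 4: "(\<Sum>k\<le>Suc m. cf m k * g k) = g 0 + (\<Sum>k\<le>m. cf m (Suc k) * g (Suc k))"
    by (simp only: sum.atMost_Suc_shift cf_0 mult_1_left)
  show ?thesis unfolding 1 2 3 4 by (simp only: add_diff_eq)
qed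

lemma cf_shift_fun:
  "(\<Sum>k\<le>Suc m. fa_scale (cf (Suc m) k) (G k)) = (\<Sum>k\<le>m. fa_scale (cf m k) (G k)) - (\<Sum>k\<le>m. fa_scale (cf m k) (G (Suc k) :: ('i,'k::field_char_0) freealg))"
  apply (rule ext)
  apply (simp only: fun_diff_def sum_app fa_scale_def)
  apply (rule cf_shift)
  done

lemma RH_rec:
  assumes fin: "finite N" and ne: "N \<noteq> {}"
  shows "RH D \<alpha> N f = (\<Sum>b\<in>N. RH D \<alpha> (N - {b}) (fa_lmul (\<alpha> b) f) - fa_lmul (\<alpha> b) (RH D \<alpha> (N - {b}) f))"
proof -
  obtain m where n: "card N = Suc m" using fin ne by (metis card_0_eq not0_implies_Suc)
  define G where "G p k = fa_mult (fa_word (map \<alpha> (take k p))) (D (fa_mult (fa_word (map \<alpha> (drop k p))) f))" for p k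
  have cardb: "card (N - {b}) = m" if "b \<in> N" for b using that n fin by simp
  have A: "RH D \<alpha> (N-{b}) (fa_lmul (\<alpha> b) f) = (\<Sum>q\<in>permutations_of_set (N-{b}). \<Sum>k\<le>m. fa_scale (cf m k) (G (q@[b]) k))"
    if b: "b \<in> N" for b
    unfolding RH_def cardb[OF b]
  proof (rule sum.cong[OF refl], rule sum.cong[OF refl])
    fix q k assume q: "q \<in> permutations_of_set (N - {b})" and k: "k \<in> {..m}"
    have lq: "length q = m" using length_finite_permutations_of_set[OF q] cardb[OF b] by simp
    have t: "take k (q @ [b]) = take k q" using lq k by simp
    have d: "drop k (q @ [b]) = drop k q @ [b]" using lq k by simp
    show "fa_scale (cf m k) (fa_mult (fa_word (map \<alpha> (take k q))) (D (fa_mult (fa_word (map \<alpha> (drop k q))) (fa_lmul (\<alpha> b) f))))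
        = fa_scale (cf m k) (G (q @ [b]) k)"
      unfolding G_def t d by (simp add: fa_word_append_mult fa_lmul_def)
  qed
  have B: "fa_lmul (\<alpha> b) (RH D \<alpha> (N-{b}) f) = (\<Sum>q\<in>permutations_of_set (N-{b}). \<Sum>k\<le>m. fa_scale (cf m k) (G (b#q) (Suc k)))"
    if b: "b \<in> N" for b
    unfolding RH_def cardb[OF b] fa_lmul_sum fa_lmul_scale G_def
    by (simp add: fa_word_cons_mult)
  have "(\<Sum>b\<in>N. RH D \<alpha> (N - {b}) (fa_lmul (\<alpha> b) f) - fa_lmul (\<alpha> b) (RH D \<alpha> (N - {b}) f))
      = (\<Sum>b\<in>N. (\<Sum>q\<in>permutations_of_set (N-{b}). \<Sum>k\<le>m. fa_scale (cf m k) (G (q@[b]) k))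
                 - (\<Sum>q\<in>permutations_of_set (N-{b}). \<Sum>k\<le>m. fa_scale (cf m k) (G (b#q) (Suc k))))"
    by (rule sum.cong[OF refl]) (simp only: A B)
  also have "\<dots> = (\<Sum>b\<in>N. \<Sum>q\<in>permutations_of_set (N-{b}). \<Sum>k\<le>m. fa_scale (cf m k) (G (q@[b]) k))
                 - (\<Sum>b\<in>N. \<Sum>q\<in>permutations_of_set (N-{b}). \<Sum>k\<le>m. fa_scale (cf m k) (G (b#q) (Suc k)))"
    by (rule sum_subtractf)
  also have "\<dots> = (\<Sum>p\<in>permutations_of_set N. \<Sum>k\<le>m. fa_scale (cf m k) (G p k))
                 - (\<Sum>p\<in>permutations_of_set N. \<Sum>k\<le>m. fa_scale (cf m k) (G p (Suc k)))"
    unfolding perm_snoc_sum[OF fin ne, of "\<lambda>p. \<Sum>k\<le>m. fa_scale (cf m k) (G p k)"]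
      perm_cons_sum[OF fin ne, of "\<lambda>p. \<Sum>k\<le>m. fa_scale (cf m k) (G p (Suc k))"] by (rule refl)
  also have "\<dots> = (\<Sum>p\<in>permutations_of_set N. (\<Sum>k\<le>m. fa_scale (cf m k) (G p k)) - (\<Sum>k\<le>m. fa_scale (cf m k) (G p (Suc k))))"
    by (rule sum_subtractf[symmetric])
  also have "\<dots> = (\<Sum>p\<in>permutations_of_set N. \<Sum>k\<le>Suc m. fa_scale (cf (Suc m) k) (G p k))"
    by (simp only: cf_shift_fun)
  also have "\<dots> = RH D \<alpha> N f"
    unfolding RH_def n G_def by simp
  finally show ?thesis by simp
qed

lemma LH_RH: "finite N \<Longrightarrow> LH D \<alpha> N f = RH D \<alpha> N f"
proof (induct "card N" arbitrary: N f)
  case 0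
  then have "N = {}" by simp
  then show ?case unfolding LH_def RH_def by (simp add: fa_scale_one cf_def)
next
  case (Suc n)
  then have ne: "N \<noteq> {}" by auto
  have IH: "\<And>b g. b \<in> N \<Longrightarrow> LH D \<alpha> (N - {b}) g = RH D \<alpha> (N - {b}) g"
    using Suc by simp
  show ?case
    unfolding LH_rec[OF Suc(3) ne] RH_rec[OF Suc(3) ne]
    by (rule sum.cong[OF refl]) (simp only: IH)
qed



definition T :: "(('i,'k::field_char_0) freealg \<Rightarrow> ('i,'k) freealg) \<Rightarrow> (nat \<Rightarrow> 'i) \<Rightarrow> nat \<Rightarrow> nat set \<Rightarrow> ('i,'k) freealg" where
  "T D \<alpha> k N = (\<Sum>p\<in>permutations_of_set N. fa_mult (fa_word (map \<alpha> (take k p))) (D (fa_word (map \<alpha> (drop k p)))))"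

definition V :: "(nat \<Rightarrow> 'i) \<Rightarrow> 'i \<Rightarrow> nat \<Rightarrow> nat set \<Rightarrow> ('i,'k::field_char_0) freealg" where
  "V \<alpha> \<mu> k N = fa_scale (of_nat (card N - k)) (\<Sum>b\<in>{b\<in>N. \<alpha> b = \<mu>}. Sym \<alpha> (N - {b}))"

lemma fa_lmul_word: "fa_lmul x (fa_word u) = fa_word (x # u)"
  unfolding fa_lmul_def fa_word_mult_word by simp

lemma Sym_cons:
  assumes "finite M" "M \<noteq> {}"
  shows "Sym \<alpha> M = (\<Sum>x\<in>M. fa_lmul (\<alpha> x) (Sym \<alpha> (M - {x})))"
  unfolding Sym_def fa_lmul_sum
  by (subst perm_cons_sum[OF assms]) (simp add: fa_lmul_word)

lemma fa_scale_zero: "fa_scale (0::'k::mult_zero) f = 0"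
  unfolding fa_scale_def by (rule ext) simp

lemma V_rec:
  assumes fin: "finite N" and k: "Suc k \<le> card N"
  shows "V \<alpha> \<mu> (Suc k) N = (\<Sum>x\<in>N. fa_lmul (\<alpha> x) (V \<alpha> \<mu> k (N - {x})))"
proof -
  let ?n = "card N"
  let ?F = "\<lambda>x b. fa_lmul (\<alpha> x) (Sym \<alpha> (N - {x} - {b}))"
  have r: "(\<Sum>x\<in>N. fa_lmul (\<alpha> x) (V \<alpha> \<mu> k (N - {x})))
        = fa_scale (of_nat (?n - Suc k)) (\<Sum>x\<in>N. \<Sum>b\<in>{b\<in>N - {x}. \<alpha> b = \<mu>}. ?F x b)"
    unfolding V_def fa_scale_sum fa_lmul_scale fa_lmul_sum
    apply (rule sum.cong[OF refl])
    subgoal for x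
      using fin by (simp only: card_Diff_singleton diff_Suc_eq_diff_pred)
    done
  show ?thesis
  proof (cases "?n - Suc k = 0")
    case True
    show ?thesis
      unfolding r unfolding V_def True of_nat_0 fa_scale_zero ..
  next
    case False
    then have n2: "2 \<le> ?n" using k by linarith
    have "(\<Sum>x\<in>N. \<Sum>b\<in>{b\<in>N - {x}. \<alpha> b = \<mu>}. ?F x b) = (\<Sum>x\<in>N. \<Sum>b\<in>{b\<in>N. b \<noteq> x \<and> \<alpha> b = \<mu>}. ?F x b)"
    proof (rule sum.cong[OF refl])
      fix x
      have "{b\<in>N - {x}. \<alpha> b = \<mu>} = {b\<in>N. b \<noteq> x \<and> \<alpha> b = \<mu>}" by blast
      then show "(\<Sum>b\<in>{b\<in>N - {x}. \<alpha> b = \<mu>}. ?F x b) = (\<Sum>b\<in>{b\<in>N. b \<noteq> x \<and> \<alpha> b = \<mu>}. ?F x b)"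
        by (simp only:)
    qed
    also have "\<dots> = (\<Sum>b\<in>N. \<Sum>x\<in>{x\<in>N. b \<noteq> x \<and> \<alpha> b = \<mu>}. ?F x b)"
      by (rule sum.swap_restrict[OF fin fin])
    also have "\<dots> = (\<Sum>b\<in>N. if \<alpha> b = \<mu> then (\<Sum>x\<in>N - {b}. ?F x b) else 0)"
    proof (rule sum.cong[OF refl])
      fix b
      show "(\<Sum>x\<in>{x\<in>N. b \<noteq> x \<and> \<alpha> b = \<mu>}. ?F x b) = (if \<alpha> b = \<mu> then (\<Sum>x\<in>N - {b}. ?F x b) else 0)"
      proof (cases "\<alpha> b = \<mu>")
        case True
        have e: "{x\<in>N. b \<noteq> x \<and> \<alpha> b = \<mu>} = N - {b}" using True by blast
        show ?thesis unfolding if_P[OF True] e ..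
      next
        case False
        have e: "{x\<in>N. b \<noteq> x \<and> \<alpha> b = \<mu>} = {}" using False by blast
        show ?thesis unfolding if_not_P[OF False] e sum.empty ..
      qed
    qed
    also have "\<dots> = (\<Sum>b\<in>{b\<in>N. \<alpha> b = \<mu>}. \<Sum>x\<in>N - {b}. ?F x b)"
      by (rule sum.inter_filter[OF fin, symmetric])
    also have "\<dots> = (\<Sum>b\<in>{b\<in>N. \<alpha> b = \<mu>}. Sym \<alpha> (N - {b}))"
    proof (rule sum.cong[OF refl])
      fix b assume "b \<in> {b\<in>N. \<alpha> b = \<mu>}"
      then have b: "b \<in> N" by simp
      have "card (N - {b}) = ?n - 1" using fin b by simp
      then have ne: "N - {b} \<noteq> {}" using n2 by (metis card.empty diff_is_0_eq le_antisym one_le_numeral not_one_le_zero numeral_le_one_iff semiring_norm(69) Suc_1 diff_Suc_1 Suc_le_eq zero_less_diff)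
      have SC: "Sym \<alpha> (N - {b}) = (\<Sum>x\<in>N - {b}. fa_lmul (\<alpha> x) (Sym \<alpha> (N - {b} - {x})))"
        using Sym_cons[of "N - {b}" \<alpha>] fin ne by simp
      show "(\<Sum>x\<in>N - {b}. ?F x b) = Sym \<alpha> (N - {b})"
        unfolding SC
      proof (rule sum.cong[OF refl])
        fix x
        have "N - {x} - {b} = N - {b} - {x}" by blast
        then show "?F x b = fa_lmul (\<alpha> x) (Sym \<alpha> (N - {b} - {x}))" by (simp only:)
      qed
    qed
    finally have eq: "(\<Sum>x\<in>N. \<Sum>b\<in>{b\<in>N - {x}. \<alpha> b = \<mu>}. ?F x b) = (\<Sum>b\<in>{b\<in>N. \<alpha> b = \<mu>}. Sym \<alpha> (N - {b}))" .
    show ?thesis unfolding r eq unfolding V_def ..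
  qed
qed



lemma fa_scale_scale: "fa_scale a (fa_scale b f) = fa_scale (a * b) (f :: ('i,'k::semigroup_mult) freealg)"
  unfolding fa_scale_def by (rule ext) (simp add: mult.assoc)

lemma fa_scale_diff: "fa_scale a (f - g) = fa_scale a f - fa_scale a (g :: ('i,'k::comm_ring_1) freealg)"
  unfolding fa_scale_def by (rule ext) (simp add: algebra_simps)

lemma fa_scale_0r: "fa_scale a (0 :: ('i,'k::mult_zero) freealg) = 0"
  unfolding fa_scale_def by (rule ext) simp

lemma coexp_sym:
  assumes "distinct ps"
  shows "coexp (map \<alpha> ps) = fa_scale (inverse (of_nat (fact (length ps)))) (Sym \<alpha> (set ps) :: ('i,'k::field_char_0) freealg)"
proof -
  let ?k = "length ps"
  have "(\<Sum>\<sigma> | \<sigma> permutes {..<?k}. fa_word (map (\<lambda>i. map \<alpha> ps ! \<sigma> i) [0..<?k]))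
      = (\<Sum>\<sigma> | \<sigma> permutes {..<?k}. (fa_word (map \<alpha> (map (\<lambda>i. ps ! \<sigma> i) [0..<?k])) :: ('i,'k) freealg))"
  proof (rule sum.cong[OF refl])
    fix \<sigma> assume "\<sigma> \<in> {\<sigma>. \<sigma> permutes {..<?k}}"
    then have p: "\<sigma> permutes {..<?k}" by simp
    have "map (\<lambda>i. map \<alpha> ps ! \<sigma> i) [0..<?k] = map \<alpha> (map (\<lambda>i. ps ! \<sigma> i) [0..<?k])"
      unfolding map_map comp_def by (intro map_cong) (use permutes_in_image[OF p] in auto)
    then show "fa_word (map (\<lambda>i. map \<alpha> ps ! \<sigma> i) [0..<?k]) = (fa_word (map \<alpha> (map (\<lambda>i. ps ! \<sigma> i) [0..<?k])) :: ('i,'k) freealg)"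
      by (rule arg_cong)
  qed
  also have "\<dots> = Sym \<alpha> (set ps)"
    unfolding Sym_def by (rule perm_bij_sum[OF assms, where G = "\<lambda>p. fa_word (map \<alpha> p)"])
  finally show ?thesis unfolding coexp_def by simp
qed

lemma del_nth:
  assumes "distinct xs" "j < length xs"
  shows "distinct (take j xs @ drop (Suc j) xs)" "set (take j xs @ drop (Suc j) xs) = set xs - {xs ! j}"
    "length (take j xs @ drop (Suc j) xs) = length xs - 1"
proof -
  have e: "xs = take j xs @ xs ! j # drop (Suc j) xs" using assms(2) by (rule id_take_nth_drop)
  have d: "distinct (take j xs @ xs ! j # drop (Suc j) xs)" using assms(1) e by metis
  then show "distinct (take j xs @ drop (Suc j) xs)" by auto
  have "set xs = set (take j xs @ xs ! j # drop (Suc j) xs)" using e by metis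
  then show "set (take j xs @ drop (Suc j) xs) = set xs - {xs ! j}" using d by auto
  show "length (take j xs @ drop (Suc j) xs) = length xs - 1" using assms(2) by simp
qed

lemma car_coexp: "coexp as \<in> fa_carrier"
  unfolding coexp_def by (intro car_scale car_sum car_word)

lemma T0:
  fixes D :: "('i::finite,'k::field_char_0) freealg \<Rightarrow> ('i,'k) freealg"
  assumes hp: "is_hat_partial C \<mu> D" and fin: "finite N"
  shows "T D \<alpha> 0 N - V \<alpha> \<mu> 0 N \<in> env_ideal C"
proof -
  let ?n = "card N"
  define ps where "ps = sorted_list_of_set N"
  have ps: "distinct ps" "set ps = N" "length ps = ?n" using fin by (auto simp: ps_def)
  define as where "as = map \<alpha> ps"
  have T0: "T D \<alpha> 0 N = D (Sym \<alpha> N)"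
    unfolding T_def Sym_def by (simp add: D_sum[OF hp] car_word)
  have fne: "(of_nat (fact m) :: 'k) \<noteq> 0" for m by simp
  have c: "(coexp as :: ('i,'k) freealg) = fa_scale (inverse (of_nat (fact ?n))) (Sym \<alpha> N)"
    unfolding as_def using coexp_sym[OF ps(1), of \<alpha>] ps by simp
  have "fa_scale (of_nat (fact ?n)) (coexp as) = (Sym \<alpha> N :: ('i,'k) freealg)"
  proof -
    have one: "(of_nat (fact ?n) :: 'k) * inverse (of_nat (fact ?n)) = 1" using fne[of ?n] by (rule right_inverse)
    show ?thesis unfolding c fa_scale_scale one fa_scale_one ..
  qed
  then have SN: "(Sym \<alpha> N :: ('i,'k) freealg) = fa_scale (of_nat (fact ?n)) (coexp as)" by (rule sym)
  have DS: "D (Sym \<alpha> N) = fa_scale (of_nat (fact ?n)) (D (coexp as))"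
    unfolding SN using hp_scale[OF hp car_coexp] .
  have cd: "(coexp_deriv \<mu> as :: ('i,'k) freealg) = fa_scale (inverse (of_nat (fact (?n - 1)))) (\<Sum>b\<in>{b\<in>N. \<alpha> b = \<mu>}. Sym \<alpha> (N - {b}))"
  proof -
    have J: "{j. j < length as \<and> as ! j = \<mu>} = {j. j < ?n \<and> \<alpha> (ps ! j) = \<mu>}"
      unfolding as_def using ps by auto
    have "coexp_deriv \<mu> as = (\<Sum>j\<in>{j. j < ?n \<and> \<alpha> (ps ! j) = \<mu>}. fa_scale (inverse (of_nat (fact (?n - 1)))) (Sym \<alpha> (N - {ps ! j})))"
      unfolding coexp_deriv_def J
    proof (rule sum.cong[OF refl])
      fix j assume "j \<in> {j. j < ?n \<and> \<alpha> (ps ! j) = \<mu>}"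
      then have j: "j < length ps" using ps by simp
      have "take j as @ drop (Suc j) as = map \<alpha> (take j ps @ drop (Suc j) ps)"
        unfolding as_def by (simp add: take_map drop_map)
      then show "coexp (take j as @ drop (Suc j) as) = fa_scale (inverse (of_nat (fact (?n - 1)))) (Sym \<alpha> (N - {ps ! j}))"
        using coexp_sym[OF del_nth(1)[OF ps(1) j], of \<alpha>] del_nth(2,3)[OF ps(1) j] ps by simp
    qed
    also have "\<dots> = fa_scale (inverse (of_nat (fact (?n - 1)))) (\<Sum>j\<in>{j. j < ?n \<and> \<alpha> (ps ! j) = \<mu>}. Sym \<alpha> (N - {ps ! j}))"
      by (simp only: fa_scale_sum)
    also have "(\<Sum>j\<in>{j. j < ?n \<and> \<alpha> (ps ! j) = \<mu>}. Sym \<alpha> (N - {ps ! j}) :: ('i,'k) freealg) = (\<Sum>b\<in>{b\<in>N. \<alpha> b = \<mu>}. Sym \<alpha> (N - {b}))"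
    proof -
      have inj: "inj_on ((!) ps) {j. j < ?n \<and> \<alpha> (ps ! j) = \<mu>}"
        using ps by (auto intro!: inj_on_nth)
      have img: "(!) ps ` {j. j < ?n \<and> \<alpha> (ps ! j) = \<mu>} = {b\<in>N. \<alpha> b = \<mu>}"
        using ps by (auto simp: in_set_conv_nth image_iff)
      show ?thesis using sum.reindex[OF inj, of "\<lambda>b. Sym \<alpha> (N - {b}) :: ('i,'k) freealg"] img by simp
    qed
    finally show ?thesis .
  qed
  have V0: "V \<alpha> \<mu> 0 N = (fa_scale (of_nat (fact ?n)) (coexp_deriv \<mu> as) :: ('i,'k) freealg)"
  proof (cases "?n = 0")
    case True
    then have "N = {}" using fin by simp
    then have e: "{b\<in>N. \<alpha> b = \<mu>} = {}" by simp
    show ?thesis unfolding V_def cd e sum.empty fa_scale_0r ..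
  next
    case False
    have f: "fact ?n = ?n * fact (?n - 1)" using False by (simp add: fact_reduce)
    have "(of_nat (fact ?n) :: 'k) * inverse (of_nat (fact (?n - 1)))
        = of_nat ?n * (of_nat (fact (?n - 1)) * inverse (of_nat (fact (?n - 1))))"
      unfolding f of_nat_mult by (simp only: mult.assoc)
    also have "\<dots> = of_nat ?n" using right_inverse[OF fne[of "?n - 1"]] by (simp only: mult_1_right)
    finally have e: "(of_nat (fact ?n) :: 'k) * inverse (of_nat (fact (?n - 1))) = of_nat ?n" .
    show ?thesis unfolding V_def cd fa_scale_scale e diff_zero ..
  qed
  have "T D \<alpha> 0 N - V \<alpha> \<mu> 0 N = fa_scale (of_nat (fact ?n)) (D (coexp as) - coexp_deriv \<mu> as)"
    unfolding T0 DS V0 fa_scale_diff ..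
  also have "\<dots> \<in> env_ideal C"
    using hp_coexp[OF hp] by (rule I_scale)
  finally show ?thesis .
qed



lemma T_rec:
  assumes fin: "finite N" and ne: "N \<noteq> {}"
  shows "T D \<alpha> (Suc k) N = (\<Sum>x\<in>N. fa_lmul (\<alpha> x) (T D \<alpha> k (N - {x})))"
  unfolding T_def fa_lmul_sum
  by (subst perm_cons_sum[OF fin ne]) (simp add: fa_word_cons_mult)

lemma TV:
  assumes hp: "is_hat_partial C \<mu> D"
  shows "finite N \<Longrightarrow> k \<le> card N \<Longrightarrow> T D \<alpha> k N - V \<alpha> \<mu> k N \<in> env_ideal C"
proof (induct k arbitrary: N)
  case 0
  show ?case by (rule T0[OF hp]) (use 0 in simp)
next
  case (Suc k)
  have ne: "N \<noteq> {}" using Suc.prems by auto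
  have "T D \<alpha> (Suc k) N - V \<alpha> \<mu> (Suc k) N = (\<Sum>x\<in>N. fa_lmul (\<alpha> x) (T D \<alpha> k (N - {x}) - V \<alpha> \<mu> k (N - {x})))"
    unfolding T_rec[OF Suc(2) ne] V_rec[OF Suc(2) Suc(3)] fa_lmul_diff sum_subtractf ..
  also have "\<dots> \<in> env_ideal C"
  proof (rule I_sum, rule I_lmul)
    fix x assume x: "x \<in> N"
    show "T D \<alpha> k (N - {x}) - V \<alpha> \<mu> k (N - {x}) \<in> env_ideal C"
      apply (rule Suc.hyps)
      using Suc.prems x by auto
  qed
  finally show ?case .
qed

lemma RH_W:
  "RH D \<alpha> N (fa_word []) = (\<Sum>k\<le>card N. fa_scale (cf (card N) k) (T D \<alpha> k N))"
  unfolding RH_def T_def fa_scale_sum fa_word_mult_word append_Nil2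
  by (rule sum.swap)

lemma alt_zero:
  assumes "2 \<le> n"
  shows "(\<Sum>k\<le>n. cf n k * of_nat (n - k)) = (0::'k::field_char_0)"
proof -
  obtain m where n: "n = Suc m" and m: "0 < m" using assms by (cases n) auto
  have "(\<Sum>k\<le>n. cf n k * of_nat (n - k)) = (\<Sum>k\<le>n. of_nat n * ((-1)^k * (of_nat (m choose k) :: 'k)))"
  proof (rule sum.cong[OF refl])
    fix k
    have "(n - k) * (n choose k) = n * (m choose k)" using binomial_absorb_comp[of n k] n by simp
    then have e: "(of_nat (n - k) :: 'k) * of_nat (n choose k) = of_nat n * of_nat (m choose k)"
      by (metis of_nat_mult)
    have "cf n k * of_nat (n - k) = (-1)^k * ((of_nat (n - k) :: 'k) * of_nat (n choose k))"
      unfolding cf_def by (simp only: mult.assoc mult.commute mult.left_commute)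
    also have "\<dots> = of_nat n * ((-1)^k * (of_nat (m choose k) :: 'k))"
      unfolding e by (simp only: mult.assoc mult.commute mult.left_commute)
    finally show "cf n k * of_nat (n - k) = of_nat n * ((-1)^k * (of_nat (m choose k) :: 'k))" .
  qed
  also have "\<dots> = of_nat n * (\<Sum>k\<le>Suc m. (-1)^k * (of_nat (m choose k) :: 'k))"
    unfolding n sum_distrib_left ..
  also have "(\<Sum>k\<le>Suc m. (-1)^k * (of_nat (m choose k) :: 'k)) = (\<Sum>k\<le>m. (-1)^k * (of_nat (m choose k) :: 'k))"
    by (simp only: sum.atMost_Suc binomial_eq_0[OF lessI] of_nat_0 mult_zero_right add_0_right)
  also have "\<dots> = 0" by (rule choose_alternating_sum[OF m])
  finally show ?thesis by (simp only: mult_zero_right)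
qed

lemma fa_scale_sumc: "(\<Sum>k\<in>A. fa_scale (c k) f) = fa_scale (\<Sum>k\<in>A. c k) (f :: ('i,'k::comm_semiring_1) freealg)"
  unfolding fa_scale_def by (rule ext) (simp add: sum_app sum_distrib_right)

lemma V_comb:
  assumes "2 \<le> card N"
  shows "(\<Sum>k\<le>card N. fa_scale (cf (card N) k) (V \<alpha> \<mu> k N)) = (0 :: ('i,'k::field_char_0) freealg)"
  unfolding V_def fa_scale_scale fa_scale_sumc alt_zero[OF assms] fa_scale_zero ..

theorem lemma4p6:
  fixes C :: "'i::finite \<Rightarrow> 'i \<Rightarrow> 'i \<Rightarrow> 'k::field_char_0"
    and \<mu> :: 'i and \<alpha> :: "nat \<Rightarrow> 'i" and w :: nat
    and D :: "('i, 'k) freealg \<Rightarrow> ('i, 'k) freealg"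
  assumes "is_lie_alg C"
    and "is_hat_partial C \<mu> D"
    and "w \<ge> 2"
  shows "(\<Sum>\<sigma> | \<sigma> permutes {..<w}. iter_comm D (map (\<lambda>i. \<alpha> (\<sigma> i)) [0..<w]) (fa_word []))
           \<in> env_ideal C"
proof -
  let ?N = "{..<w}"
  have cN: "card ?N = w" by simp
  have st: "set [0..<w] = ?N" by auto
  have lw: "length [0..<w] = w" by simp
  have "(\<Sum>\<sigma> | \<sigma> permutes {..<w}. iter_comm D (map (\<lambda>i. \<alpha> (\<sigma> i)) [0..<w]) (fa_word []))
      = (\<Sum>\<sigma> | \<sigma> permutes {..<length [0..<w]}. iter_comm D (map \<alpha> (map (\<lambda>i. [0..<w] ! \<sigma> i) [0..<length [0..<w]])) (fa_word []))"
    unfolding lw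
  proof (rule sum.cong[OF refl])
    fix \<sigma> assume "\<sigma> \<in> {\<sigma>. \<sigma> permutes {..<w}}"
    then have p: "\<sigma> permutes {..<w}" by simp
    have "map (\<lambda>i. \<alpha> (\<sigma> i)) [0..<w] = map \<alpha> (map (\<lambda>i. [0..<w] ! \<sigma> i) [0..<w])"
      unfolding map_map comp_def by (intro map_cong) (use permutes_in_image[OF p] in auto)
    then show "iter_comm D (map (\<lambda>i. \<alpha> (\<sigma> i)) [0..<w]) (fa_word []) = iter_comm D (map \<alpha> (map (\<lambda>i. [0..<w] ! \<sigma> i) [0..<w])) (fa_word [])"
      by (rule arg_cong)
  qed
  also have "\<dots> = (\<Sum>p\<in>permutations_of_set (set [0..<w]). iter_comm D (map \<alpha> p) (fa_word []))"
    by (rule perm_bij_sum[OF distinct_upt, where G = "\<lambda>p. iter_comm D (map \<alpha> p) (fa_word [])"])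
  also have "\<dots> = LH D \<alpha> ?N (fa_word [])"
    unfolding LH_def st ..
  also have "\<dots> = RH D \<alpha> ?N (fa_word [])" by (rule LH_RH) simp
  also have "\<dots> = (\<Sum>k\<le>w. fa_scale (cf w k) (T D \<alpha> k ?N)) - (\<Sum>k\<le>w. fa_scale (cf w k) (V \<alpha> \<mu> k ?N))"
  proof -
    have VZ: "(\<Sum>k\<le>w. fa_scale (cf w k) (V \<alpha> \<mu> k ?N)) = (0 :: ('i,'k) freealg)"
      using V_comb[of ?N \<alpha> \<mu>, unfolded cN, OF assms(3)] .
    show ?thesis unfolding RH_W cN VZ diff_zero ..
  qed
  also have "\<dots> = (\<Sum>k\<le>w. fa_scale (cf w k) (T D \<alpha> k ?N - V \<alpha> \<mu> k ?N))"
    unfolding fa_scale_diff sum_subtractf ..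
  also have "\<dots> \<in> env_ideal C"
  proof (rule I_sum, rule I_scale, rule TV[OF assms(2)])
    fix k assume "k \<in> {..w}"
    then show "finite ?N" "k \<le> card ?N" by auto
  qed
  finally show ?thesis .
qed

end
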